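(* Let $T>0$ and constants $K_1\ge0$, $K_2\ne0$ with $K_1+K_2\ge0$. For $t\in[0,T]$ let $$\Lambda(t,T)=1+\frac{K_1}{K_2}\Big(1-e^{-\frac{K_2(T-t)}{2}}\Big)+\frac{K_1}{K_2}\Big(1-e^{-\frac{K_2t}{2}}\Big)+\Big(\frac{K_1}{K_2}\Big)^2\Big[\Big(1-e^{-\frac{K_2t}{2}}\Big)+\frac12\Big(e^{-\frac{K_2(T+t)}{2}}-e^{-\frac{K_2(T-t)}{2}}\Big)\Big].$$ (i) If $K_2<0$, then $t\mapsto\Lambda(t,T)$ is strictly increasing on $[0,T]$. (ii) If $K_2>0$, then the maximum of $t\mapsto\Lambda(t,T)$ over $[0,T]$ is attained at a point $t_0\in(0,T)$. *)

theory Defs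
  imports Complex_Main
begin

definition Lambda :: "real \<Rightarrow> real \<Rightarrow> real \<Rightarrow> real \<Rightarrow> real" where
  "Lambda K1 K2 T t =
     1 + (K1 / K2) * (1 - exp (- (K2 * (T - t) / 2)))
       + (K1 / K2) * (1 - exp (- (K2 * t / 2)))
       + (K1 / K2)^2 * ((1 - exp (- (K2 * t / 2)))
            + (1/2) * (exp (- (K2 * (T + t) / 2)) - exp (- (K2 * (T - t) / 2))))"

end

theory Submission
  imports Defs
begin

lemma Lambda_form:
  fixes K1 K2 T t :: real
  assumes "K2 \<noteq> 0"
  defines "r \<equiv> K1 / K2" and "E \<equiv> exp (-(K2*T/2))"
  shows "Lambda K1 K2 T t = 1 + 2*r + r^2 + (-r - r^2 + r^2*E/2) * exp (-(K2*t/2))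
           - (E*(r + r^2/2)) / exp (-(K2*t/2))"
proof -
  define u where "u = exp (-(K2*t/2))"
  have u0: "u > 0" unfolding u_def by simp
  have e1: "exp (- (K2 * (T - t) / 2)) = E / u"
    unfolding E_def u_def by (simp add: exp_diff[symmetric] field_simps)
  have e2: "exp (- (K2 * (T + t) / 2)) = E * u"
    unfolding E_def u_def by (simp add: exp_add[symmetric] algebra_simps)
  show ?thesis unfolding Lambda_def e1 e2 u_def[symmetric] r_def[symmetric]
    using u0 by (simp add: field_simps power2_eq_square)
qed

theorem proposition1:
  fixes T K1 K2 :: real
  assumes "T > 0" and "K1 \<ge> 0" and "K2 \<noteq> 0" and "K1 + K2 \<ge> 0"
  shows "(K2 < 0 \<longrightarrow> strict_mono_on {0..T} (\<lambda>t. Lambda K1 K2 T t))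
       \<and> (K2 > 0 \<longrightarrow> (\<exists>t0\<in>{0<..<T}. \<forall>t\<in>{0..T}. Lambda K1 K2 T t \<le> Lambda K1 K2 T t0))"
proof -
  define r where "r = K1 / K2"
  define E where "E = exp (-(K2*T/2))"
  define A where "A = -r - r^2 + r^2*E/2"
  define B where "B = E*(r + r^2/2)"
  define f where "f = (\<lambda>u::real. 1 + 2*r + r^2 + A*u - B/u)"
  have L: "\<And>t. Lambda K1 K2 T t = f (exp (-(K2*t/2)))"
    using Lambda_form[OF assms(3), of K1 T] unfolding f_def A_def B_def r_def E_def by simp
  have diff: "\<And>u v. u > 0 \<Longrightarrow> v > 0 \<Longrightarrow> f v - f u = (v - u) * (A + B/(u*v))"
    unfolding f_def by (simp add: field_simps)
  have AB: "A + B = r*(1+r)*(E-1)" unfolding A_def B_def by (simp add: algebra_simps power2_eq_square)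
  have E0: "E > 0" unfolding E_def by simp
  have ABE: "E*(A + B/E^2) = -r*(E-1) + r^2*(E-1)^2/2"
    unfolding A_def B_def using E0 by (simp add: field_simps power2_eq_square)
  have part1: "K2 < 0 \<longrightarrow> strict_mono_on {0..T} (\<lambda>t. Lambda K1 K2 T t)"
  proof
    assume K2: "K2 < 0"
    have "K1 \<ge> -K2" using assms(4) by simp
    hence r1: "r \<le> -1" unfolding r_def using K2 by (simp add: divide_le_eq)
    have E1: "E > 1" unfolding E_def using K2 assms(1) by (simp add: mult_neg_pos)
    have c1: "A + B \<ge> 0" unfolding AB using r1 E1
      by (simp add: mult_nonpos_nonpos zero_le_mult_iff)
    have "-r*(E-1) > 0" using r1 E1 by (simp add: mult_neg_pos)
    moreover have "r^2*(E-1)^2/2 \<ge> 0" by simp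
    ultimately have "E*(A + B/E^2) > 0" unfolding ABE by linarith
    hence c2: "A + B/E^2 > 0" using E0 by (simp add: zero_less_mult_iff)
    show "strict_mono_on {0..T} (\<lambda>t. Lambda K1 K2 T t)"
    proof (rule strict_mono_onI)
      fix x y assume xy: "x \<in> {0..T}" "y \<in> {0..T}" "x < y"
      define u where "u = exp (-(K2*x/2))"
      define v where "v = exp (-(K2*y/2))"
      have u1: "u \<ge> 1" unfolding u_def using K2 xy by (simp add: mult_nonpos_nonneg)
      have uv: "u < v" unfolding u_def v_def using K2 xy by (simp add: mult_strict_right_mono_neg)
      have vE: "v \<le> E" unfolding v_def E_def using K2 xy
        by (simp add: mult_left_mono_neg)
      have uE: "u \<le> E" using uv vE by simp
      have "1*1 < u*v" by (rule mult_le_less_imp_less) (use u1 uv in auto)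
      hence w1: "u*v > 1" by simp
      have "u*v \<le> E*E" by (rule mult_mono) (use u1 uv uE vE in auto)
      hence wE: "u*v \<le> E^2" by (simp add: power2_eq_square)
      have pos: "A + B/(u*v) > 0"
      proof (cases "B \<ge> 0")
        case True
        have "B/E^2 \<le> B/(u*v)" using True wE w1 E0 by (intro divide_left_mono) auto
        thus ?thesis using c2 by linarith
      next
        case False
        have "B * 1 > B * (u*v)" using False w1 by (intro mult_strict_left_mono_neg) auto
        hence "B/(u*v) > B" using w1 by (simp add: less_divide_eq)
        thus ?thesis using c1 by linarith
      qed
      have "f v - f u > 0" using diff[of u v] u1 uv pos by simp
      thus "Lambda K1 K2 T x < Lambda K1 K2 T y" unfolding L u_def[symmetric] v_def[symmetric] by simp
    qed
  qed
  have part2: "K2 > 0 \<longrightarrow> (\<exists>t0\<in>{0<..<T}. \<forall>t\<in>{0..T}. Lambda K1 K2 T t \<le> Lambda K1 K2 T t0)"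
  proof
    assume K2: "K2 > 0"
    show "\<exists>t0\<in>{0<..<T}. \<forall>t\<in>{0..T}. Lambda K1 K2 T t \<le> Lambda K1 K2 T t0"
    proof (cases "K1 = 0")
      case True
      hence "\<And>t. Lambda K1 K2 T t = 1" unfolding Lambda_def by simp
      thus ?thesis using assms(1) by (intro bexI[of _ "T/2"]) auto
    next
      case False
      hence r0: "r > 0" unfolding r_def using K2 assms(2) by simp
      have E1: "E < 1" unfolding E_def using K2 assms(1) by simp
      have "A + B < 0" unfolding AB using r0 E1 by (simp add: mult_pos_neg)
      have B0: "B > 0" unfolding B_def using E0 r0 by (intro mult_pos_pos) (auto intro: add_pos_nonneg)
      have A0: "A < 0" using \<open>A + B < 0\<close> B0 by linarith
      have "-r*(E-1) > 0" using r0 E1 by (simp add: mult_pos_neg)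
      moreover have "r^2*(E-1)^2/2 \<ge> 0" by simp
      ultimately have "E*(A + B/E^2) > 0" unfolding ABE by linarith
      hence c2: "A + B/E^2 > 0" using E0 by (simp add: zero_less_mult_iff)
      hence c2': "A*E^2 + B > 0" using E0 by (simp add: field_simps)
      define s where "s = sqrt (B / (-A))"
      have q0: "B/(-A) > 0" using A0 B0 by (intro divide_pos_pos) auto
      have s0: "s > 0" unfolding s_def using q0 by simp
      have s2: "s^2 = B/(-A)" unfolding s_def using q0 by simp
      have Bs: "B = -A * s^2" using s2 A0 by (simp add: field_simps)
      have "A*(1 - s^2) < 0" using Bs \<open>A + B < 0\<close> by (simp add: algebra_simps)
      hence "1 - s^2 > 0" using A0 by (simp add: mult_less_0_iff)
      hence "s^2 < 1^2" by simp
      hence s1: "s < 1" using s0 by (smt (verit) power_mono)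
      have "A*(E^2 - s^2) > 0" using Bs c2' by (simp add: algebra_simps)
      hence "E^2 < s^2" using A0 by (simp add: zero_less_mult_iff)
      hence sE: "E < s" using s0 E0 by (smt (verit) power_mono)
      define t0 where "t0 = -2 * ln s / K2"
      have et0: "exp (-(K2*t0/2)) = s" unfolding t0_def using K2 s0 by simp
      have "ln s < 0" using s0 s1 by simp
      hence t00: "t0 > 0" unfolding t0_def using K2 by (simp add: divide_neg_pos)
      have "ln E < ln s" using sE E0 by simp
      hence "-(K2*T/2) < ln s" unfolding E_def by simp
      hence "t0 < T" unfolding t0_def using K2 by (simp add: field_simps)
      show ?thesis
      proof (intro bexI[of _ t0] ballI)
        fix t assume "t \<in> {0..T}"
        define u where "u = exp (-(K2*t/2))"
        have u0: "u > 0" unfolding u_def by simp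
        have "f s - f u = (s - u) * (A + B/(u*s))" using diff u0 s0 by simp
        also have "\<dots> = -A * (s-u)^2 / u" unfolding Bs using u0 s0
          by (simp add: field_simps power2_eq_square)
        also have "\<dots> \<ge> 0" using A0 u0 by (intro divide_nonneg_pos mult_nonneg_nonneg) auto
        finally show "Lambda K1 K2 T t \<le> Lambda K1 K2 T t0"
          unfolding L et0 u_def[symmetric] by simp
      qed (use t00 \<open>t0 < T\<close> in auto)
    qed
  qed
  show ?thesis using part1 part2 by blast
qed

end
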